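(* Let $n,k,l$ be nonnegative integers with $k+l\le n$, $\alpha,\beta>-1$, $\sigma:=\alpha+\beta+1$, and let $C_{ij}$ ($k\le i,j\le n-l$) be the B\'ezier coefficients of the constrained dual Bernstein polynomials, $D^{(n,k,l)}_i(x;\alpha,\beta)=\sum_{j=k}^{n-l}C_{ij}B^n_j(x)$. Then \[ C_{k,n-l}=\binom{n}{k}^{-1}\binom{n}{l}^{-1}\frac{(-1)^{n-k-l}(\sigma+2k+2l+1)_{n-k-l}}{B(\alpha+2l+1,\beta+2k+1)\,(n-k-l)!}, \] and for $j=n-l-1,n-l-2,\ldots,k$, \[ C_{kj}=\frac{(j-n)(j-k+1)(j+\beta+k+2)}{(j+1)(j-n+l)(j-\alpha-l-n)}\,C_{k,j+1}. \]
   Context: For $\alpha,\beta>-1$ define $\langle f,g\rangle:=\int_0^1(1-x)^{\alpha}x^{\beta}f(x)g(x)\,dx$. Bernstein polynomials: $B^n_i(x)=\binom ni x^i(1-x)^{n-i}$. For $k+l\le n$, $\Pi_n^{(k,l)}$ is the space of polynomials $P$ of degree $\le n$ with $P^{(i)}(0)=0$ for $0\le i\le k-1$ and $P^{(j)}(1)=0$ for $0\le j\le l-1$; it has basis $B^n_k,\ldots,B^n_{n-l}$. The constrained dual Bernstein polynomials $D^{(n,k,l)}_i(x;\alpha,\beta)$, $k\le i\le n-l$, are the unique elements of $\Pi_n^{(k,l)}$ with $\langle D^{(n,k,l)}_i,B^n_j\rangle=\delta_{ij}$ for $i,j=k,\ldots,n-l$. Notation: $(c)_k:=\prod_{j=0}^{k-1}(c+j)$;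 $B(\lambda,\mu)=\Gamma(\lambda)\Gamma(\mu)/\Gamma(\lambda+\mu)$. *)

theory Defs
  imports "HOL-Analysis.Analysis" "HOL-Computational_Algebra.Polynomial"
begin

definition jac_ip :: "real \<Rightarrow> real \<Rightarrow> real poly \<Rightarrow> real poly \<Rightarrow> real" where
  "jac_ip \<alpha> \<beta> f g =
     (LINT x:{0<..<1}|lborel. (1 - x) powr \<alpha> * x powr \<beta> * poly f x * poly g x)"

definition bernstein :: "nat \<Rightarrow> nat \<Rightarrow> real poly" where
  "bernstein n i = smult (real (n choose i)) (monom 1 i * [:1, -1:] ^ (n - i))"

definition Pi_space :: "nat \<Rightarrow> nat \<Rightarrow> nat \<Rightarrow> real poly set" where
  "Pi_space n k l = {p. degree p \<le> n \<and>
      (\<forall>i<k. poly ((pderiv ^^ i) p) 0 = 0) \<and>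
      (\<forall>j<l. poly ((pderiv ^^ j) p) 1 = 0)}"

definition dual_bernstein :: "nat \<Rightarrow> nat \<Rightarrow> nat \<Rightarrow> real \<Rightarrow> real \<Rightarrow> nat \<Rightarrow> real poly" where
  "dual_bernstein n k l \<alpha> \<beta> i =
     (THE P. P \<in> Pi_space n k l \<and>
        (\<forall>j\<in>{k..n-l}. jac_ip \<alpha> \<beta> P (bernstein n j) = (if i = j then 1 else 0)))"

definition dual_coeff :: "nat \<Rightarrow> nat \<Rightarrow> nat \<Rightarrow> real \<Rightarrow> real \<Rightarrow> nat \<Rightarrow> nat \<Rightarrow> real" where
  "dual_coeff n k l \<alpha> \<beta> i =
     (THE c. (\<forall>j. j \<notin> {k..n-l} \<longrightarrow> c j = 0) \<and>
        dual_bernstein n k l \<alpha> \<beta> i = (\<Sum>j=k..n-l. smult (c j) (bernstein n j)))"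

end

theory Submission
  imports Defs
begin


lemma alt_sum_Suc:
  fixes f :: "nat \<Rightarrow> real"
  shows "(\<Sum>p\<le>Suc m. (-1)^p * real (Suc m choose p) * f p) =
         (\<Sum>p\<le>m. (-1)^p * real (m choose p) * f p) - (\<Sum>p\<le>m. (-1)^p * real (m choose p) * f (Suc p))"
proof -
  have A: "(\<Sum>p\<le>Suc m. (-1)^p * real (Suc m choose p) * f p) =
        f 0 + (\<Sum>p\<le>m. (-1)^(Suc p) * real (m choose p) * f (Suc p))
                 + (\<Sum>p\<le>m. (-1)^(Suc p) * real (m choose Suc p) * f (Suc p))"
    by (subst sum.atMost_Suc_shift) (simp add: sum.distrib[symmetric] ring_distribs)
  have B: "f 0 + (\<Sum>p\<le>m. (-1)^(Suc p) * real (m choose Suc p) * f (Suc p)) =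
             (\<Sum>p\<le>Suc m. (-1)^p * real (m choose p) * f p)"
    by (subst sum.atMost_Suc_shift) simp
  have C: "(\<Sum>p\<le>Suc m. (-1)^p * real (m choose p) * f p) = (\<Sum>p\<le>m. (-1)^p * real (m choose p) * f p)"
    by simp
  show ?thesis unfolding A using B C by (simp add: sum_negf)
qed

lemma diff_shift_degree:
  fixes f :: "real poly"
  defines "g \<equiv> f - f \<circ>\<^sub>p [:1,1:]"
  shows "g = 0 \<or> degree g < degree f"
proof (cases "degree f = 0")
  case True
  then obtain c where "f = [:c:]" by (metis degree_eq_zeroE)
  then show ?thesis by (simp add: g_def)
next
  case False
  have d: "degree (f \<circ>\<^sub>p [:1,1:]) = degree f" by (simp add: degree_pcompose)
  have lc: "lead_coeff (f \<circ>\<^sub>p [:1,1:]) = lead_coeff f" by (simp add: lead_coeff_comp)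
  have dg: "degree g \<le> degree f" unfolding g_def using degree_diff_le[of f "degree f" "f \<circ>\<^sub>p [:1,1:]"] d by simp
  have cg: "coeff g (degree f) = 0" unfolding g_def using lc d by simp
  show ?thesis
  proof (rule ccontr)
    assume "\<not> ?thesis"
    then have "g \<noteq> 0" "degree g = degree f" using dg by auto
    then show False using cg by (metis leading_coeff_0_iff)
  qed
qed

lemma fin_diff_poly:
  fixes f :: "real poly"
  shows "f = 0 \<or> degree f < m \<Longrightarrow> (\<Sum>p\<le>m. (-1)^p * real (m choose p) * poly f (real p)) = 0"
proof (induction m arbitrary: f)
  case 0
  then show ?case by simp
next
  case (Suc m)
  define g where "g = f - f \<circ>\<^sub>p [:1,1:]"
  have "g = 0 \<or> degree g < m"
    using diff_shift_degree[of f] Suc.prems unfolding g_def by auto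
  then have IH: "(\<Sum>p\<le>m. (-1)^p * real (m choose p) * poly g (real p)) = 0" by (rule Suc.IH)
  have "(\<Sum>p\<le>Suc m. (-1)^p * real (Suc m choose p) * poly f (real p)) =
        (\<Sum>p\<le>m. (-1)^p * real (m choose p) * poly f (real p)) - (\<Sum>p\<le>m. (-1)^p * real (m choose p) * poly f (real (Suc p)))"
    by (rule alt_sum_Suc)
  also have "\<dots> = (\<Sum>p\<le>m. (-1)^p * real (m choose p) * poly g (real p))"
    by (simp add: g_def poly_pcompose sum_subtractf[symmetric] algebra_simps)
  finally show ?case using IH by simp
qed

lemma partial_frac:
  fixes x :: real
  assumes "x > 0"
  shows "(\<Sum>p\<le>m. (-1)^p * real (m choose p) * (1 / (x + real p))) = fact m / pochhammer x (Suc m)"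
  using assms
proof (induction m arbitrary: x)
  case 0
  then show ?case by simp
next
  case (Suc m)
  have "(\<Sum>p\<le>Suc m. (-1)^p * real (Suc m choose p) * (1 / (x + real p))) =
        (\<Sum>p\<le>m. (-1)^p * real (m choose p) * (1 / (x + real p))) - (\<Sum>p\<le>m. (-1)^p * real (m choose p) * (1 / (x + real (Suc p))))"
    by (rule alt_sum_Suc)
  also have "(\<Sum>p\<le>m. (-1)^p * real (m choose p) * (1 / (x + real (Suc p)))) =
             (\<Sum>p\<le>m. (-1)^p * real (m choose p) * (1 / ((x + 1) + real p)))"
    by (simp add: algebra_simps)
  also have "\<dots> = fact m / pochhammer (x+1) (Suc m)" using Suc.prems by (intro Suc.IH) simp
  also have "(\<Sum>p\<le>m. (-1)^p * real (m choose p) * (1 / (x + real p))) = fact m / pochhammer x (Suc m)"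
    using Suc.prems by (rule Suc.IH)
  also have "pochhammer x (Suc m) * (x + real (Suc m)) = x * pochhammer (x+1) (Suc m)"
    by (metis pochhammer_Suc pochhammer_rec of_nat_Suc)
  then have "fact m / pochhammer x (Suc m) - fact m / pochhammer (x+1) (Suc m) = fact (Suc m) / pochhammer x (Suc (Suc m))"
  proof -
    assume h: "pochhammer x (Suc m) * (x + real (Suc m)) = x * pochhammer (x+1) (Suc m)"
    have p1: "pochhammer x (Suc m) > 0" using Suc.prems by (intro pochhammer_pos)
    have p2: "pochhammer (x+1) (Suc m) > 0" using Suc.prems by (intro pochhammer_pos) simp
    have e: "pochhammer x (Suc (Suc m)) = pochhammer x (Suc m) * (x + real (Suc m))"
      by (simp add: pochhammer_Suc)
    have q: "pochhammer (x+1) (Suc m) = pochhammer x (Suc m) * (x + real (Suc m)) / x"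
      using h Suc.prems by (simp add: field_simps)
    have gen: "F / P - F / (P * (x + M) / x) = F * M / (P * (x + M))" if "P > 0" "x > 0" "M > 0" for F P M :: real
    proof -
      have "0 < M * P + P * x" using that by (simp add: add_pos_pos)
      then show ?thesis using that by (simp add: field_simps)
    qed
    show ?thesis unfolding e q using gen[OF p1 Suc.prems, of "real (Suc m)" "fact m"]
      by (simp add: fact_Suc mult.commute)
  qed
  finally show ?case .
qed

lemma Beta_shift:
  fixes a b :: real
  assumes "a > 0" "b > 0"
  shows "Beta (a + real r) (b + real s) = Beta a b * pochhammer a r * pochhammer b s / pochhammer (a + b) (r + s)"
proof (induction r)
  case 0
  show ?case
  proof (induction s)
    case 0 then show ?case by simp
  next
    case (Suc s)
    have nz: "b + real s \<notin> \<int>\<^sub>\<le>\<^sub>0" using assms by (auto elim!: nonpos_Ints_cases)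
    have "(a + (b + real s)) * Beta a (b + real s + 1) = (b + real s) * Beta a (b + real s)"
      by (rule Beta_plus1_right[OF nz])
    then have "Beta a (b + real (Suc s)) = (b + real s) / (a + b + real s) * Beta a (b + real s)"
      using assms by (simp add: field_simps)
    also have "Beta a (b + real s) = Beta a b * pochhammer b s / pochhammer (a + b) s"
      using Suc.IH by simp
    finally show ?case using assms
      by (simp add: pochhammer_Suc field_simps)
  qed
next
  case (Suc r)
  have nz: "a + real r \<notin> \<int>\<^sub>\<le>\<^sub>0" using assms by (auto elim!: nonpos_Ints_cases)
  have "(a + real r + (b + real s)) * Beta (a + real r + 1) (b + real s) = (a + real r) * Beta (a + real r) (b + real s)"
    by (rule Beta_plus1_left[OF nz])
  then have "Beta (a + real (Suc r)) (b + real s) = (a + real r) / (a + b + real (r + s)) * Beta (a + real r) (b + real s)"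
    using assms by (simp add: field_simps)
  also note Suc.IH
  finally show ?case using assms
    by (simp add: pochhammer_Suc field_simps)
qed



lemma mono_int:
  fixes \<alpha> \<beta> :: real
  assumes "\<alpha> > -1" "\<beta> > -1"
  shows "set_integrable lborel {0<..<1} (\<lambda>x. (1-x) powr \<alpha> * x powr \<beta> * (x^r * (1-x)^s))"
    and "(LINT x:{0<..<1}|lborel. (1-x) powr \<alpha> * x powr \<beta> * (x^r * (1-x)^s)) = Beta (\<beta> + real r + 1) (\<alpha> + real s + 1)"
proof -
  have a: "\<beta> + real r + 1 > 0" and b: "\<alpha> + real s + 1 > 0" using assms by auto
  have eq: "x powr (\<beta> + real r) * (1-x) powr (\<alpha> + real s) = (1-x) powr \<alpha> * x powr \<beta> * (x^r * (1-x)^s)"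
    if "x \<in> {0<..<1}" for x :: real
    using that by (simp add: powr_add powr_realpow mult_ac)
  have I: "set_integrable lborel {0..1} (\<lambda>t. t powr (\<beta> + real r) * (1-t) powr (\<alpha> + real s))"
    using integrable_Beta[OF a b] by simp
  have I2: "set_integrable lborel {0<..<1} (\<lambda>t. t powr (\<beta> + real r) * (1-t) powr (\<alpha> + real s))"
    by (rule set_integrable_subset[OF I]) auto
  show int: "set_integrable lborel {0<..<1} (\<lambda>x. (1-x) powr \<alpha> * x powr \<beta> * (x^r * (1-x)^s))"
  proof -
    have "set_integrable lborel {0<..<1} (\<lambda>t. t powr (\<beta> + real r) * (1-t) powr (\<alpha> + real s)) =
          set_integrable lborel {0<..<1} (\<lambda>x. (1-x) powr \<alpha> * x powr \<beta> * (x^r * (1-x)^s))"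
      by (rule set_integrable_cong) (auto simp: eq)
    then show ?thesis using I2 by simp
  qed
  have "(LINT x:{0<..<1}|lborel. (1-x) powr \<alpha> * x powr \<beta> * (x^r * (1-x)^s)) =
        (LINT x:{0<..<1}|lborel. x powr (\<beta> + real r) * (1-x) powr (\<alpha> + real s))"
    by (rule set_lebesgue_integral_cong) (auto simp: eq)
  also have "\<dots> = integral {0<..<1} (\<lambda>x. x powr (\<beta> + real r) * (1-x) powr (\<alpha> + real s))"
    by (rule set_borel_integral_eq_integral(2)[OF I2])
  also have "\<dots> = Beta (\<beta> + real r + 1) (\<alpha> + real s + 1)"
    using has_integral_Icc_iff_Ioo[THEN iffD1, OF has_integral_Beta_real[OF a b]] by (simp add: integral_unique)
  finally show "(LINT x:{0<..<1}|lborel. (1-x) powr \<alpha> * x powr \<beta> * (x^r * (1-x)^s)) = Beta (\<beta> + real r + 1) (\<alpha> + real s + 1)" .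
qed

definition Lf :: "real \<Rightarrow> real \<Rightarrow> real poly \<Rightarrow> real" where
  "Lf \<alpha> \<beta> p = (LINT x:{0<..<1}|lborel. (1 - x) powr \<alpha> * x powr \<beta> * poly p x)"

lemma Lf_integrable:
  fixes \<alpha> \<beta> :: real
  assumes "\<alpha> > -1" "\<beta> > -1"
  shows "set_integrable lborel {0<..<1} (\<lambda>x. (1 - x) powr \<alpha> * x powr \<beta> * poly p x)"
proof -
  have e: "(\<lambda>x. indicator {0<..<1} x *\<^sub>R ((1 - x) powr \<alpha> * x powr \<beta> * poly p x)) =
        (\<lambda>x. \<Sum>i\<le>degree p. coeff p i * (indicator {0<..<1} x *\<^sub>R ((1-x) powr \<alpha> * x powr \<beta> * (x^i * (1-x)^0))))"
    by (rule ext) (simp add: poly_altdef sum_distrib_left sum_distrib_right mult_ac)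
  show ?thesis unfolding set_integrable_def e
  proof (rule Bochner_Integration.integrable_sum)
    fix i assume "i \<in> {..degree p}"
    show "integrable lborel (\<lambda>x. coeff p i * (indicator {0<..<1} x *\<^sub>R ((1-x) powr \<alpha> * x powr \<beta> * (x^i * (1-x)^0))))"
      using mono_int(1)[OF assms, of i 0] unfolding set_integrable_def by (rule integrable_mult_right)
  qed
qed

lemma Lf_add:
  assumes "\<alpha> > -1" "\<beta> > -1"
  shows "Lf \<alpha> \<beta> (p + q) = Lf \<alpha> \<beta> p + Lf \<alpha> \<beta> q"
  unfolding Lf_def using Lf_integrable[OF assms, of p] Lf_integrable[OF assms, of q]
  by (simp add: distrib_left set_integral_add)

lemma Lf_smult:
  shows "Lf \<alpha> \<beta> (smult c p) = c * Lf \<alpha> \<beta> p"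
  unfolding Lf_def by (simp add: mult_ac)

lemma Lf_zero: "Lf \<alpha> \<beta> 0 = 0"
  unfolding Lf_def by simp

lemma Lf_sum:
  assumes "\<alpha> > -1" "\<beta> > -1"
  shows "Lf \<alpha> \<beta> (\<Sum>j\<in>S. f j) = (\<Sum>j\<in>S. Lf \<alpha> \<beta> (f j))"
proof (induction S rule: infinite_finite_induct)
  case (infinite A) then show ?case by (simp add: Lf_zero)
next
  case empty then show ?case by (simp add: Lf_zero)
next
  case (insert x F) then show ?case by (simp add: Lf_add[OF assms])
qed

lemma Lf_monom:
  assumes "\<alpha> > -1" "\<beta> > -1"
  shows "Lf \<alpha> \<beta> (monom 1 r * [:1,-1:]^s) = Beta (\<beta> + real r + 1) (\<alpha> + real s + 1)"
  unfolding Lf_def using mono_int(2)[OF assms, of r s] by (simp add: poly_monom)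

lemma jac_ip_Lf: "jac_ip \<alpha> \<beta> f g = Lf \<alpha> \<beta> (f * g)"
  unfolding jac_ip_def Lf_def by (simp add: mult_ac)

lemma bern_prod:
  assumes "i \<le> n" "j \<le> n"
  shows "bernstein n i * bernstein n j = smult (real (n choose i) * real (n choose j)) (monom 1 (i + j) * [:1,-1:]^(2*n - i - j))"
proof -
  have "2*n - i - j = (n - i) + (n - j)" using assms by simp
  moreover have "monom (1::real) (i+j) = monom 1 i * monom 1 j" by (simp add: mult_monom)
  ultimately show ?thesis unfolding bernstein_def
    by (simp add: power_add mult_ac)
qed

lemma jac_bern:
  assumes "\<alpha> > -1" "\<beta> > -1" "i \<le> n" "j \<le> n"
  shows "jac_ip \<alpha> \<beta> (bernstein n i) (bernstein n j) =
     real (n choose i) * real (n choose j) * Beta (\<beta> + real (i + j) + 1) (\<alpha> + real (2*n - i - j) + 1)"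
  unfolding jac_ip_Lf bern_prod[OF assms(3,4)] Lf_smult Lf_monom[OF assms(1,2)] by simp

lemma Lf_pos:
  fixes \<alpha> \<beta> :: real
  assumes "\<alpha> > -1" "\<beta> > -1" "Lf \<alpha> \<beta> (p * p) = 0"
  shows "p = 0"
proof (rule ccontr)
  assume p: "p \<noteq> 0"
  define f where "f = (\<lambda>x. indicator {0<..<1} x *\<^sub>R ((1 - x) powr \<alpha> * x powr \<beta> * poly (p*p) x))"
  have int: "integrable lborel f" using Lf_integrable[OF assms(1,2), of "p*p"] unfolding f_def set_integrable_def .
  have nn: "AE x in lborel. 0 \<le> f x" unfolding f_def by (auto simp: indicator_def)
  have "integral\<^sup>L lborel f = 0" using assms(3) unfolding Lf_def f_def set_lebesgue_integral_def .
  then have ae: "AE x in lborel. f x = 0" using integral_nonneg_eq_0_iff_AE[OF int nn] by simp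
  have fin: "finite {x. poly p x = 0}" by (rule poly_roots_finite[OF p])
  have ae2: "AE x in lborel. x \<notin> {x. poly p x = 0}"
    by (rule AE_not_in[OF finite_imp_null_set_lborel[OF fin]])
  have "AE x in lborel. x \<notin> {0<..<1::real}"
  proof (rule AE_mp[OF AE_conj_iff[THEN iffD2, OF conjI[OF ae ae2]]], rule AE_I2, safe)
    fix x :: real assume "f x = 0" "poly p x \<noteq> 0" "x \<in> {0<..<1}"
    then show False unfolding f_def by (simp add: indicator_def)
  qed
  then have "emeasure lborel {0<..<1::real} = 0"
    by (subst (asm) AE_iff_measurable[of "{0<..<1}"]) auto
  then show False by simp
qed



lemma dvd_pderiv_pow:
  fixes p :: "real poly"
  assumes "[:-a,1:]^(Suc k) dvd p"
  shows "[:-a,1:]^k dvd pderiv p"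
proof -
  obtain q where q: "p = [:-a,1:]^(Suc k) * q" using assms by (auto elim: dvdE)
  have "pderiv p = [:-a,1:]^k * (smult (of_nat (Suc k)) (pderiv [:-a,1:] * q) + [:-a,1:] * pderiv q)"
    unfolding q pderiv_mult pderiv_power_Suc by (simp add: algebra_simps)
  then show ?thesis by simp
qed

lemma dvd_funpow_pderiv:
  fixes p :: "real poly"
  assumes "[:-a,1:]^k dvd p" "i \<le> k"
  shows "[:-a,1:]^(k - i) dvd (pderiv^^i) p"
  using assms(2)
proof (induction i)
  case 0 then show ?case using assms(1) by simp
next
  case (Suc i)
  then have "[:-a,1:]^(Suc (k - Suc i)) dvd (pderiv^^i) p" using Suc_diff_Suc[of i k] by simp
  then show ?case by (simp add: dvd_pderiv_pow)
qed

lemma deriv_vanish_iff: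
  fixes p :: "real poly"
  shows "(\<forall>i<k. poly ((pderiv^^i) p) a = 0) \<longleftrightarrow> [:-a,1:]^k dvd p"
proof
  assume "[:-a,1:]^k dvd p"
  show "\<forall>i<k. poly ((pderiv^^i) p) a = 0"
  proof (intro allI impI)
    fix i assume i: "i < k"
    have "[:-a,1:]^(k - i) dvd (pderiv^^i) p" using dvd_funpow_pderiv[OF \<open>[:-a,1:]^k dvd p\<close>] i by simp
    moreover have "[:-a,1:] dvd [:-a,1:]^(k-i)" using i by (simp add: dvd_power)
    ultimately have "[:-a,1:] dvd (pderiv^^i) p" by (rule dvd_trans[rotated])
    then show "poly ((pderiv^^i) p) a = 0" by (simp add: poly_eq_0_iff_dvd)
  qed
next
  assume "\<forall>i<k. poly ((pderiv^^i) p) a = 0"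
  then show "[:-a,1:]^k dvd p"
  proof (induction k arbitrary: p)
    case 0 then show ?case by simp
  next
    case (Suc k)
    have r: "poly p a = 0" using Suc.prems[rule_format, of 0] by simp
    have fe: "(pderiv^^i) (pderiv p) = (pderiv^^(Suc i)) p" for i by (simp only: funpow_Suc_right comp_def)
    have "\<forall>i<k. poly ((pderiv^^i) (pderiv p)) a = 0"
      using Suc.prems unfolding fe by auto
    then have d: "[:-a,1:]^k dvd pderiv p" by (rule Suc.IH)
    show ?case
    proof (cases "p = 0")
      case True then show ?thesis by simp
    next
      case False
      show ?thesis
      proof (cases "pderiv p = 0")
        case True
        then have "degree p = 0" by (simp add: pderiv_eq_0_iff)
        then obtain c where "p = [:c:]" by (metis degree_eq_zeroE)
        then show ?thesis using r False by simp
      next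
        case pd: False
        have "order a p = Suc (order a (pderiv p))" by (rule order_pderiv[OF False r])
        moreover have "k \<le> order a (pderiv p)" using d pd by (simp add: order_divides)
        ultimately have "Suc k \<le> order a p" by simp
        then show ?thesis by (subst order_divides) simp
      qed
    qed
  qed
qed

lemma Pi_space_char:
  "Pi_space n k l = {p. degree p \<le> n \<and> [:0,1:]^k dvd p \<and> [:-1,1:]^l dvd p}"
  unfolding Pi_space_def using deriv_vanish_iff[of k _ 0] deriv_vanish_iff[of l _ 1] by auto

lemma Pi_space_diff:
  "p \<in> Pi_space n k l \<Longrightarrow> q \<in> Pi_space n k l \<Longrightarrow> p - q \<in> Pi_space n k l"
  unfolding Pi_space_char by (auto intro: dvd_diff order.trans[OF degree_diff_le])

lemma Pi_space_sum:
  assumes "\<And>j. j \<in> S \<Longrightarrow> f j \<in> Pi_space n k l"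
  shows "(\<Sum>j\<in>S. f j) \<in> Pi_space n k l"
  using assms
proof (induction S rule: infinite_finite_induct)
  case (infinite A) then show ?case by (simp add: Pi_space_char)
next
  case empty then show ?case by (simp add: Pi_space_char)
next
  case (insert x F)
  then show ?case unfolding Pi_space_char
    by (auto intro!: dvd_add degree_add_le)
qed

lemma Pi_space_smult:
  "p \<in> Pi_space n k l \<Longrightarrow> smult c p \<in> Pi_space n k l"
  unfolding Pi_space_char by (auto intro: dvd_smult)

lemma bern_Pi:
  assumes "k \<le> j" "j \<le> n - l" "k + l \<le> n"
  shows "bernstein n j \<in> Pi_space n k l"
proof -
  have "degree (monom (1::real) j * [:1,-1:]^(n-j)) \<le> j + (n - j)"
    by (rule order.trans[OF degree_mult_le]) (simp add: degree_monom_eq degree_power_le order.trans[OF degree_power_le])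
  then have deg: "degree (bernstein n j) \<le> n" unfolding bernstein_def using assms
    by (intro order.trans[OF degree_smult_le]) simp
  have "[:0,1:]^k dvd (monom (1::real) j)" unfolding monom_altdef using assms by (simp add: le_imp_power_dvd)
  then have d1: "[:0,1:]^k dvd bernstein n j" unfolding bernstein_def by (intro dvd_smult dvd_mult2)
  have e: "[:1,-1:] = [:-1,1:] * [:-1::real:]" by simp
  have "[:-1,1:]^l dvd ([:-1,1:]::real poly)^(n-j)" using assms by (simp add: le_imp_power_dvd)
  then have "[:-1,1:]^l dvd ([:1,-1:]::real poly)^(n-j)" unfolding e power_mult_distrib by simp
  then have d2: "[:-1,1:]^l dvd bernstein n j" unfolding bernstein_def by (intro dvd_smult dvd_mult)
  show ?thesis unfolding Pi_space_char using deg d1 d2 by simp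
qed



lemma T_expand:
  fixes m k l n i :: nat
  assumes "i \<le> m" "n = m + k + l"
  shows "[:0,1:]^k * [:-1,1:]^l * monom 1 i =
    (\<Sum>t\<le>m-i. smult ((-1)^l * real (m-i choose t) / real (n choose (k+i+t))) (bernstein n (k+i+t)))"
proof (rule poly_eq_poly_eq_iff[THEN iffD1], rule ext)
  fix x :: real
  have "poly (\<Sum>t\<le>m-i. smult ((-1)^l * real (m-i choose t) / real (n choose (k+i+t))) (bernstein n (k+i+t))) x
     = (\<Sum>t\<le>m-i. (-1)^l * real (m-i choose t) * (x^(k+i) * (1-x)^l) * (x^t * (1-x)^(m-i-t)))"
    unfolding poly_sum
  proof (rule sum.cong[OF refl])
    fix t assume t: "t \<in> {..m-i}"
    have nz: "real (n choose (k+i+t)) \<noteq> 0" using t assms by simp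
    have e: "n - (k+i+t) = l + (m-i-t)" using t assms by simp
    show "poly (smult ((-1)^l * real (m-i choose t) / real (n choose (k+i+t))) (bernstein n (k+i+t))) x =
          (-1)^l * real (m-i choose t) * (x^(k+i) * (1-x)^l) * (x^t * (1-x)^(m-i-t))"
      unfolding bernstein_def e using nz by (simp add: poly_monom power_add field_simps)
  qed
  also have "\<dots> = (-1)^l * (x^(k+i) * (1-x)^l) * (\<Sum>t\<le>m-i. real (m-i choose t) * x^t * (1-x)^(m-i-t))"
    by (simp add: sum_distrib_left mult_ac)
  also have "(\<Sum>t\<le>m-i. real (m-i choose t) * x^t * (1-x)^(m-i-t)) = (x + (1-x))^(m-i)"
    by (rule binomial_ring[symmetric])
  also have "(-1)^l * (x^(k+i) * (1-x)^l) * (x + (1-x))^(m-i) = x^k * (x - 1)^l * x^i"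
  proof -
    have "(x - 1)^l = ((-1) * (1-x))^l" by simp
    also have "\<dots> = (-1)^l * (1-x)^l" by (rule power_mult_distrib)
    finally show ?thesis by (simp add: power_add)
  qed
  finally show "poly ([:0,1:]^k * [:-1,1:]^l * monom 1 i) x =
    poly (\<Sum>t\<le>m-i. smult ((-1)^l * real (m-i choose t) / real (n choose (k+i+t))) (bernstein n (k+i+t))) x"
    by (simp add: poly_monom)
qed

lemma Lf_diff:
  assumes "\<alpha> > -1" "\<beta> > -1"
  shows "Lf \<alpha> \<beta> (p - q) = Lf \<alpha> \<beta> p - Lf \<alpha> \<beta> q"
proof -
  have "Lf \<alpha> \<beta> (p + smult (-1) q) = Lf \<alpha> \<beta> p + Lf \<alpha> \<beta> (smult (-1) q)" by (rule Lf_add[OF assms])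
  moreover have "Lf \<alpha> \<beta> (-q) = - Lf \<alpha> \<beta> q" using Lf_smult[of \<alpha> \<beta> "-1" q] by simp
  ultimately show ?thesis by simp
qed

lemma Pi_orth_zero:
  fixes \<alpha> \<beta> :: real
  assumes ab: "\<alpha> > -1" "\<beta> > -1" and kl: "k + l \<le> n" and P: "P \<in> Pi_space n k l"
    and orth: "\<forall>j\<in>{k..n-l}. jac_ip \<alpha> \<beta> P (bernstein n j) = 0"
  shows "P = 0"
proof (rule ccontr)
  assume Pnz: "P \<noteq> 0"
  define m where "m = n - k - l"
  have nm: "n = m + k + l" using kl m_def by simp
  from P have degP: "degree P \<le> n" and d0: "[:0,1:]^k dvd P" and d1: "[:-1,1:]^l dvd P"
    unfolding Pi_space_char by auto
  obtain R where R: "P = [:0,1:]^k * R" using d0 by (auto elim: dvdE)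
  have Rnz: "R \<noteq> 0" using Pnz R by auto
  have o0: "order 1 (([:0,1:]::real poly)^k) = 0" by (rule order_0I) simp
  have "l \<le> order 1 P" using d1 Pnz by (simp add: order_divides)
  also have "order 1 P = order 1 R" unfolding R using Pnz R by (simp add: order_mult o0)
  finally have "[:-1,1:]^l dvd R" by (simp add: order_divides)
  then obtain Q where Q: "R = [:-1,1:]^l * Q" by (auto elim: dvdE)
  have PQ: "P = [:0,1:]^k * [:-1,1:]^l * Q" using R Q by (simp add: mult_ac)
  have Qnz: "Q \<noteq> 0" using Rnz Q by auto
  have "degree P = k + l + degree Q" unfolding PQ using Qnz
    by (simp add: degree_mult_eq degree_linear_power)
  then have degQ: "degree Q \<le> m" using degP nm by simp
  have LT: "Lf \<alpha> \<beta> (P * ([:0,1:]^k * [:-1,1:]^l * monom 1 i)) = 0" if i: "i \<le> m" for i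
  proof -
    have "Lf \<alpha> \<beta> (P * ([:0,1:]^k * [:-1,1:]^l * monom 1 i)) =
      (\<Sum>t\<le>m-i. ((-1)^l * real (m-i choose t) / real (n choose (k+i+t))) * jac_ip \<alpha> \<beta> P (bernstein n (k+i+t)))"
      unfolding T_expand[OF i nm] sum_distrib_left jac_ip_Lf
      by (simp add: Lf_sum[OF ab] Lf_smult)
    also have "\<dots> = 0" using orth i nm by (intro sum.neutral) auto
    finally show ?thesis .
  qed
  have Qsum: "Q = (\<Sum>i\<le>degree Q. smult (coeff Q i) (monom 1 i))"
    by (simp add: smult_monom poly_as_sum_of_monoms)
  have "P * P = P * ([:0,1:]^k * [:-1,1:]^l * Q)" by (simp add: PQ[symmetric])
  also have "\<dots> = P * ([:0,1:]^k * [:-1,1:]^l * (\<Sum>i\<le>degree Q. smult (coeff Q i) (monom 1 i)))"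
    by (metis Qsum)
  also have "\<dots> = (\<Sum>i\<le>degree Q. smult (coeff Q i) (P * ([:0,1:]^k * [:-1,1:]^l * monom 1 i)))"
    by (simp add: sum_distrib_left mult_ac)
  finally have "Lf \<alpha> \<beta> (P * P) = (\<Sum>i\<le>degree Q. coeff Q i * Lf \<alpha> \<beta> (P * ([:0,1:]^k * [:-1,1:]^l * monom 1 i)))"
    by (simp add: Lf_sum[OF ab] Lf_smult)
  also have "\<dots> = 0" using LT degQ by (intro sum.neutral) auto
  finally have "P = 0" by (rule Lf_pos[OF ab])
  then show False using Pnz by simp
qed

lemma bern_indep:
  fixes c :: "nat \<Rightarrow> real"
  assumes supp: "\<forall>j. j \<notin> {k..n-l} \<longrightarrow> c j = 0"
    and z: "(\<Sum>j=k..n-l. smult (c j) (bernstein n j)) = 0"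
  shows "c j = 0"
proof (rule ccontr)
  assume cj: "c j \<noteq> 0"
  define S where "S = {j\<in>{k..n-l}. c j \<noteq> 0}"
  have jS: "j \<in> S" using cj supp unfolding S_def by auto
  have fS: "finite S" unfolding S_def by simp
  define j0 where "j0 = Min S"
  have j0S: "j0 \<in> S" unfolding j0_def using fS jS by (intro Min_in) auto
  have j0min: "\<And>j'. j' \<in> S \<Longrightarrow> j0 \<le> j'" unfolding j0_def using fS by simp
  have j0n: "j0 \<le> n" using j0S unfolding S_def by auto
  have "coeff (\<Sum>j=k..n-l. smult (c j) (bernstein n j)) j0 =
        (\<Sum>j=k..n-l. if j = j0 then c j0 * real (n choose j0) else 0)"
    unfolding coeff_sum
  proof (rule sum.cong[OF refl])
    fix j' assume j': "j' \<in> {k..n-l}"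
    show "coeff (smult (c j') (bernstein n j')) j0 = (if j' = j0 then c j0 * real (n choose j0) else 0)"
    proof (cases "j' < j0")
      case True
      then have "j' \<notin> S" using j0min by force
      then have "c j' = 0" using j' unfolding S_def by auto
      then show ?thesis using True by simp
    next
      case False
      then show ?thesis unfolding bernstein_def
        by (auto simp: coeff_monom_mult coeff_0_power)
    qed
  qed
  also have "\<dots> = c j0 * real (n choose j0)" using j0S unfolding S_def by simp
  finally have "c j0 * real (n choose j0) = 0" using z by simp
  then show False using j0S j0n unfolding S_def by simp
qed



definition ee :: "real \<Rightarrow> real \<Rightarrow> nat \<Rightarrow> nat \<Rightarrow> real" where
  "ee A Bb m p = (-1)^p * real (m choose p) * pochhammer (A + real m - real p) p / pochhammer (Bb + 1) p"

lemma poly_lin_prod: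
  "poly (\<Prod>i\<in>{0..<r}. [:c + real i, d:]) x = (\<Prod>i\<in>{0..<r}. c + real i + d * x)"
  by (simp add: poly_prod mult.commute)

lemma degree_lin_prod:
  "degree (\<Prod>i\<in>{0..<r}. [:c + real i, d:]) \<le> r"
proof -
  have "degree (\<Prod>i\<in>{0..<r}. [:c + real i, d:]) \<le> (\<Sum>i\<in>{0..<r}. degree [:c + real i, d:])"
    using degree_prod_sum_le[of "{0..<r}" "\<lambda>i. [:c + real i, d:]"] by (simp add: o_def)
  also have "\<dots> \<le> (\<Sum>i\<in>{0..<r}. 1)" by (intro sum_mono) simp
  finally show ?thesis by simp
qed

lemma poch_as_prod1:
  "pochhammer (A + real m - real p) r = (\<Prod>i\<in>{0..<r}. (A + real m) + real i + (-1) * real p)"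
  by (simp add: pochhammer_prod algebra_simps)

lemma poch_as_prod2:
  "pochhammer (Bb + 1 + real p) r = (\<Prod>i\<in>{0..<r}. (Bb + 1) + real i + 1 * real p)"
  by (simp add: pochhammer_prod algebra_simps)

lemma S_pos:
  fixes A Bb :: real
  assumes A: "A > 0" and B: "Bb > 0" and q: "1 \<le> q" "q \<le> m"
  shows "(\<Sum>p\<le>m. ee A Bb m p * pochhammer Bb (p+q) * pochhammer A (2*m - (p+q))) = 0"
proof -
  define F where "F = (\<Prod>i\<in>{0..<m-q}. [:(A + real m) + real i, -1:]) * (\<Prod>i\<in>{0..<q-1}. [:(Bb + 1) + real i, 1:])"
  have degF: "degree F < m"
  proof -
    have "degree F \<le> (m - q) + (q - 1)" unfolding F_def
      by (rule order.trans[OF degree_mult_le]) (intro add_mono degree_lin_prod)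
    then show ?thesis using q by simp
  qed
  have polyF: "poly F (real p) = pochhammer (A + real m - real p) (m-q) * pochhammer (Bb + 1 + real p) (q-1)" for p
    unfolding F_def poly_mult poly_lin_prod poch_as_prod1 poch_as_prod2 by simp
  have trm: "ee A Bb m p * pochhammer Bb (p+q) * pochhammer A (2*m - (p+q)) =
              Bb * pochhammer A m * ((-1)^p * real (m choose p) * poly F (real p))" if p: "p \<le> m" for p
  proof -
    have i: "pochhammer A (2*m - (p+q)) = pochhammer A (m-p) * pochhammer (A + real m - real p) (m-q)"
    proof -
      have e: "2*m - (p+q) = (m-p) + (m-q)" using p q by simp
      show ?thesis unfolding e pochhammer_product' using p by (simp add: of_nat_diff algebra_simps)
    qed
    have ii: "pochhammer A m = pochhammer A (m-p) * pochhammer (A + real m - real p) p"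
      using pochhammer_product'[of A "m-p" p] p by (simp add: of_nat_diff add_diff_eq)
    have iii: "pochhammer Bb (p+q) = Bb * pochhammer (Bb+1) p * pochhammer (Bb + 1 + real p) (q-1)"
    proof -
      have "p + q = Suc (p + (q-1))" using q by simp
      then have "pochhammer Bb (p+q) = pochhammer Bb (Suc (p + (q-1)))" by (simp only:)
      also have "\<dots> = Bb * pochhammer (Bb+1) (p + (q-1))" by (rule pochhammer_rec)
      also have "\<dots> = Bb * pochhammer (Bb+1) p * pochhammer (Bb + 1 + real p) (q-1)"
        by (simp add: pochhammer_product')
      finally show ?thesis .
    qed
    have "pochhammer (Bb+1) p > 0" using B by (intro pochhammer_pos) simp
    then have nz: "pochhammer (Bb+1) p \<noteq> 0" by simp
    show ?thesis unfolding polyF i iii ee_def using nz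
      by (simp add: ii field_simps)
  qed
  have "(\<Sum>p\<le>m. ee A Bb m p * pochhammer Bb (p+q) * pochhammer A (2*m - (p+q))) =
        Bb * pochhammer A m * (\<Sum>p\<le>m. (-1)^p * real (m choose p) * poly F (real p))"
    by (simp add: trm sum_distrib_left)
  also have "\<dots> = 0" using fin_diff_poly[of F m] degF by simp
  finally show ?thesis .
qed

lemma S_zero:
  fixes A Bb :: real
  assumes A: "A > 0" and B: "Bb > 0"
  shows "(\<Sum>p\<le>m. ee A Bb m p * pochhammer Bb p * pochhammer A (2*m - p)) =
          pochhammer A m * pochhammer (A + Bb + real m) m * fact m / pochhammer (Bb + 1) m"
proof -
  define G where "G = (\<Prod>i\<in>{0..<m}. [:(A + real m) + real i, -1:])"
  define H where "H = synthetic_div G (-Bb)"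
  define g0 where "g0 = poly G (-Bb)"
  have GH: "G = [:Bb, 1:] * H + [:g0:]" unfolding H_def g0_def using synthetic_div_correct'[of "-Bb" G] by simp
  have degG: "degree G \<le> m" unfolding G_def by (rule degree_lin_prod)
  have degH: "H = 0 \<or> degree H < m"
  proof (cases "degree G = 0")
    case True then show ?thesis unfolding H_def by (simp add: synthetic_div_eq_0_iff)
  next
    case False
    then have "degree H < m" unfolding H_def using degG by (simp add: degree_synthetic_div)
    then show ?thesis by simp
  qed
  have g0: "g0 = pochhammer (A + Bb + real m) m"
    unfolding g0_def G_def poly_lin_prod by (simp add: pochhammer_prod algebra_simps)
  have polyG: "poly G (real p) = pochhammer (A + real m - real p) m" for p
    unfolding G_def poly_lin_prod poch_as_prod1 by simp
  have trm: "ee A Bb m p * pochhammer Bb p * pochhammer A (2*m - p) =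
              Bb * pochhammer A m * ((-1)^p * real (m choose p) * poly H (real p)
                 + g0 * ((-1)^p * real (m choose p) * (1 / (Bb + real p))))" if p: "p \<le> m" for p
  proof -
    have i: "pochhammer A (2*m - p) = pochhammer A (m-p) * pochhammer (A + real m - real p) m"
    proof -
      have e: "2*m - p = (m-p) + m" using p by simp
      show ?thesis unfolding e pochhammer_product' using p by (simp add: of_nat_diff algebra_simps)
    qed
    have ii: "pochhammer A m = pochhammer A (m-p) * pochhammer (A + real m - real p) p"
      using pochhammer_product'[of A "m-p" p] p by (simp add: of_nat_diff add_diff_eq)
    have iii: "pochhammer Bb p * (Bb + real p) = Bb * pochhammer (Bb+1) p"
      by (metis pochhammer_Suc pochhammer_rec)
    have "pochhammer (Bb+1) p > 0" using B by (intro pochhammer_pos) simp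
    then have nz: "pochhammer (Bb+1) p \<noteq> 0" by simp
    have bp: "Bb + real p > 0" using B by simp
    have "poly G (real p) = (Bb + real p) * poly H (real p) + g0" by (subst GH) (simp add: algebra_simps)
    then have pG: "pochhammer (A + real m - real p) m = (Bb + real p) * poly H (real p) + g0" by (simp add: polyG)
    have iv: "pochhammer Bb p = Bb * pochhammer (Bb+1) p / (Bb + real p)" using iii bp by (simp add: field_simps)
    have gen: "s * b / P1 * (Bb * P1 / d) * (a * (d * h + g)) = Bb * (a * b) * (s * h + g * (s * (1 / d)))"
      if "P1 \<noteq> 0" "d \<noteq> 0" for s b P1 d a h g :: real
      using that by (simp add: field_simps)
    show ?thesis unfolding i ee_def iv pG ii
      using bp by (intro gen nz) simp
  qed
  have "(\<Sum>p\<le>m. ee A Bb m p * pochhammer Bb p * pochhammer A (2*m - p)) =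
        Bb * pochhammer A m * ((\<Sum>p\<le>m. (-1)^p * real (m choose p) * poly H (real p))
           + g0 * (\<Sum>p\<le>m. (-1)^p * real (m choose p) * (1 / (Bb + real p))))"
  proof -
    have "(\<Sum>p\<le>m. ee A Bb m p * pochhammer Bb p * pochhammer A (2*m - p)) =
      (\<Sum>p\<le>m. Bb * pochhammer A m * ((-1)^p * real (m choose p) * poly H (real p)
                 + g0 * ((-1)^p * real (m choose p) * (1 / (Bb + real p)))))"
      by (rule sum.cong[OF refl]) (simp add: trm)
    then show ?thesis by (simp only: sum_distrib_left distrib_left sum.distrib)
  qed
  also have "(\<Sum>p\<le>m. (-1)^p * real (m choose p) * poly H (real p)) = 0" using fin_diff_poly[OF degH] .
  also have "(\<Sum>p\<le>m. (-1)^p * real (m choose p) * (1 / (Bb + real p))) = fact m / pochhammer Bb (Suc m)"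
    by (rule partial_frac[OF B])
  also have "pochhammer Bb (Suc m) = Bb * pochhammer (Bb+1) m" by (simp add: pochhammer_rec)
  finally show ?thesis using B unfolding g0 by (simp add: field_simps)
qed



lemma choose_step:
  assumes "k < n"
  shows "real (n choose Suc k) * real (Suc k) = real (n choose k) * real (n - k)"
proof -
  obtain n' where n: "n = Suc n'" using assms by (cases n) auto
  have "Suc k * (Suc n' choose Suc k) = Suc n' * (n' choose k)" by (rule Suc_times_binomial)
  moreover have "(Suc n' - k) * (Suc n' choose k) = Suc n' * ((Suc n' - 1) choose k)" by (rule binomial_absorb_comp)
  ultimately have "(n choose Suc k) * Suc k = (n choose k) * (n - k)" unfolding n by (simp add: mult.commute)
  then have "real ((n choose Suc k) * Suc k) = real ((n choose k) * (n - k))" by simp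
  then show ?thesis by (simp only: of_nat_mult)
qed

lemma Beta_pos: "a > 0 \<Longrightarrow> b > 0 \<Longrightarrow> Beta a b > (0::real)"
  unfolding Beta_def by (simp add: Gamma_real_pos)

lemma jac_sum_left:
  assumes "\<alpha> > -1" "\<beta> > -1"
  shows "jac_ip \<alpha> \<beta> (\<Sum>j\<in>S. smult (c j) (f j)) g = (\<Sum>j\<in>S. c j * jac_ip \<alpha> \<beta> (f j) g)"
  unfolding jac_ip_Lf sum_distrib_right by (simp add: Lf_sum[OF assms] Lf_smult)

definition Ecoef :: "real \<Rightarrow> real \<Rightarrow> nat \<Rightarrow> nat \<Rightarrow> nat \<Rightarrow> real" where
  "Ecoef \<alpha> \<beta> n k l =
     pochhammer ((\<alpha> + 2 * real l + 1) + (\<beta> + 2 * real k + 1)) (n-k-l) * pochhammer ((\<beta> + 2 * real k + 1) + 1) (n-k-l)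
     / (real (n choose k) * Beta (\<alpha> + 2 * real l + 1) (\<beta> + 2 * real k + 1) * pochhammer (\<alpha> + 2 * real l + 1) (n-k-l) * fact (n-k-l))"

definition cc :: "real \<Rightarrow> real \<Rightarrow> nat \<Rightarrow> nat \<Rightarrow> nat \<Rightarrow> nat \<Rightarrow> real" where
  "cc \<alpha> \<beta> n k l j = (if j \<in> {k..n-l} then
      Ecoef \<alpha> \<beta> n k l * ee (\<alpha> + 2 * real l + 1) (\<beta> + 2 * real k + 1) (n-k-l) (j-k) / real (n choose j) else 0)"

definition DD :: "real \<Rightarrow> real \<Rightarrow> nat \<Rightarrow> nat \<Rightarrow> nat \<Rightarrow> real poly" where
  "DD \<alpha> \<beta> n k l = (\<Sum>j=k..n-l. smult (cc \<alpha> \<beta> n k l j) (bernstein n j))"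

lemma DD_ip:
  fixes \<alpha> \<beta> :: real
  assumes ab: "\<alpha> > -1" "\<beta> > -1" and kl: "k + l \<le> n" and q: "q \<le> n - k - l"
  shows "jac_ip \<alpha> \<beta> (DD \<alpha> \<beta> n k l) (bernstein n (k+q)) = (if q = 0 then 1 else 0)"
proof -
  define m where "m = n - k - l"
  define A where "A = \<alpha> + 2 * real l + 1"
  define Bb where "Bb = \<beta> + 2 * real k + 1"
  define E where "E = Ecoef \<alpha> \<beta> n k l"
  have hn: "n = m + k + l" using kl m_def by simp
  have Ap: "A > 0" and Bp: "Bb > 0" using ab by (auto simp: A_def Bb_def)
  have qm: "q \<le> m" using q m_def by simp
  define K where "K = real (n choose (k+q)) * E * Beta Bb A / pochhammer (Bb + A) (2*m)"
  have "jac_ip \<alpha> \<beta> (DD \<alpha> \<beta> n k l) (bernstein n (k+q)) =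
        (\<Sum>j=k..n-l. cc \<alpha> \<beta> n k l j * jac_ip \<alpha> \<beta> (bernstein n j) (bernstein n (k+q)))"
    unfolding DD_def by (rule jac_sum_left[OF ab])
  also have "\<dots> = (\<Sum>j=0+k..m+k. cc \<alpha> \<beta> n k l j * jac_ip \<alpha> \<beta> (bernstein n j) (bernstein n (k+q)))"
    using hn by (simp add: add.commute)
  also have "\<dots> = (\<Sum>p=0..m. cc \<alpha> \<beta> n k l (p+k) * jac_ip \<alpha> \<beta> (bernstein n (p+k)) (bernstein n (k+q)))"
    by (rule sum.shift_bounds_cl_nat_ivl)
  also have "\<dots> = (\<Sum>p\<le>m. K * (ee A Bb m p * pochhammer Bb (p+q) * pochhammer A (2*m - (p+q))))"
    unfolding atMost_atLeast0
  proof (rule sum.cong[OF refl])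
    fix p assume p: "p \<in> {0..m}"
    have pn: "p + k \<le> n" "k + q \<le> n" using p qm hn by auto
    have c1: "cc \<alpha> \<beta> n k l (p+k) * real (n choose (p+k)) = E * ee A Bb m p"
      using p hn pn unfolding cc_def E_def A_def Bb_def m_def by auto
    have b1: "\<beta> + real (p + k + (k + q)) + 1 = Bb + real (p+q)" unfolding Bb_def by simp
    have b2: "\<alpha> + real (2 * n - (p + k) - (k + q)) + 1 = A + real (2*m - (p+q))"
    proof -
      have "2 * n - (p + k) - (k + q) = 2 * l + (2*m - (p+q))" using hn p qm by auto
      then show ?thesis unfolding A_def by simp
    qed
    have b3: "Beta (Bb + real (p+q)) (A + real (2*m - (p+q))) =
              Beta Bb A * pochhammer Bb (p+q) * pochhammer A (2*m - (p+q)) / pochhammer (Bb + A) (2*m)"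
      using Beta_shift[OF Bp Ap, of "p+q" "2*m - (p+q)"] p qm by simp
    show "cc \<alpha> \<beta> n k l (p+k) * jac_ip \<alpha> \<beta> (bernstein n (p+k)) (bernstein n (k+q)) =
          K * (ee A Bb m p * pochhammer Bb (p+q) * pochhammer A (2*m - (p+q)))"
      unfolding jac_bern[OF ab pn] b1 b2 b3 K_def
      using c1 by (simp add: field_simps)
  qed
  also have "\<dots> = K * (\<Sum>p\<le>m. ee A Bb m p * pochhammer Bb (p+q) * pochhammer A (2*m - (p+q)))"
    by (simp add: sum_distrib_left)
  finally have main: "jac_ip \<alpha> \<beta> (DD \<alpha> \<beta> n k l) (bernstein n (k+q)) =
      K * (\<Sum>p\<le>m. ee A Bb m p * pochhammer Bb (p+q) * pochhammer A (2*m - (p+q)))" .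
  show ?thesis
  proof (cases "q = 0")
    case False
    then show ?thesis using main S_pos[OF Ap Bp, of q m] qm by simp
  next
    case True
    have S: "(\<Sum>p\<le>m. ee A Bb m p * pochhammer Bb (p+q) * pochhammer A (2*m - (p+q))) =
          pochhammer A m * pochhammer (A + Bb + real m) m * fact m / pochhammer (Bb + 1) m"
      using S_zero[OF Ap Bp, of m] True by simp
    have E: "E = pochhammer (A + Bb) m * pochhammer (Bb + 1) m / (real (n choose k) * Beta A Bb * pochhammer A m * fact m)"
      unfolding E_def Ecoef_def A_def Bb_def m_def ..
    have P2: "pochhammer (Bb + A) (2*m) = pochhammer (A + Bb) m * pochhammer (A + Bb + real m) m"
      using pochhammer_product'[of "A + Bb" m m] by (simp add: mult_2 add.commute)
    have nz: "real (n choose k) > 0" "Beta A Bb > 0" "pochhammer A m > 0" "pochhammer (Bb+1) m > 0"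
      "pochhammer (A + Bb) m > 0" "pochhammer (A + Bb + real m) m > 0" "(fact m :: real) > 0"
      using Ap Bp kl by (auto intro!: pochhammer_pos Beta_pos)
    have BB: "Beta Bb A = Beta A Bb" by (rule Beta_commute)
    show ?thesis using main True unfolding S K_def E P2 BB using nz
      by (simp add: field_simps)
  qed
qed



lemma DD_Pi:
  assumes "k + l \<le> n"
  shows "DD \<alpha> \<beta> n k l \<in> Pi_space n k l"
  unfolding DD_def using assms by (intro Pi_space_sum Pi_space_smult bern_Pi) auto

lemma DD_dual:
  fixes \<alpha> \<beta> :: real
  assumes ab: "\<alpha> > -1" "\<beta> > -1" and kl: "k + l \<le> n"
  shows "dual_bernstein n k l \<alpha> \<beta> k = DD \<alpha> \<beta> n k l"
  unfolding dual_bernstein_def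
proof (rule the_equality)
  have ip: "jac_ip \<alpha> \<beta> (DD \<alpha> \<beta> n k l) (bernstein n j) = (if k = j then 1 else 0)" if j: "j \<in> {k..n-l}" for j
  proof -
    have "jac_ip \<alpha> \<beta> (DD \<alpha> \<beta> n k l) (bernstein n (k + (j-k))) = (if j - k = 0 then 1 else 0)"
      using j by (intro DD_ip[OF ab kl]) auto
    then show ?thesis using j by auto
  qed
  show "DD \<alpha> \<beta> n k l \<in> Pi_space n k l \<and> (\<forall>j\<in>{k..n - l}. jac_ip \<alpha> \<beta> (DD \<alpha> \<beta> n k l) (bernstein n j) = (if k = j then 1 else 0))"
    using DD_Pi[OF kl] ip by blast
  fix P
  assume P: "P \<in> Pi_space n k l \<and> (\<forall>j\<in>{k..n - l}. jac_ip \<alpha> \<beta> P (bernstein n j) = (if k = j then 1 else 0))"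
  have "P - DD \<alpha> \<beta> n k l = 0"
  proof (rule Pi_orth_zero[OF ab kl])
    show "P - DD \<alpha> \<beta> n k l \<in> Pi_space n k l" using P DD_Pi[OF kl] by (intro Pi_space_diff) auto
    show "\<forall>j\<in>{k..n - l}. jac_ip \<alpha> \<beta> (P - DD \<alpha> \<beta> n k l) (bernstein n j) = 0"
    proof
      fix j assume j: "j \<in> {k..n-l}"
      have "jac_ip \<alpha> \<beta> (P - DD \<alpha> \<beta> n k l) (bernstein n j) = jac_ip \<alpha> \<beta> P (bernstein n j) - jac_ip \<alpha> \<beta> (DD \<alpha> \<beta> n k l) (bernstein n j)"
        unfolding jac_ip_Lf left_diff_distrib by (rule Lf_diff[OF ab])
      then show "jac_ip \<alpha> \<beta> (P - DD \<alpha> \<beta> n k l) (bernstein n j) = 0" using P ip[OF j] j by simp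
    qed
  qed
  then show "P = DD \<alpha> \<beta> n k l" by simp
qed

lemma coeff_eq:
  fixes \<alpha> \<beta> :: real
  assumes ab: "\<alpha> > -1" "\<beta> > -1" and kl: "k + l \<le> n"
  shows "dual_coeff n k l \<alpha> \<beta> k = cc \<alpha> \<beta> n k l"
  unfolding dual_coeff_def DD_dual[OF ab kl]
proof (rule the_equality)
  show "(\<forall>j. j \<notin> {k..n - l} \<longrightarrow> cc \<alpha> \<beta> n k l j = 0) \<and> DD \<alpha> \<beta> n k l = (\<Sum>j = k..n - l. smult (cc \<alpha> \<beta> n k l j) (bernstein n j))"
    unfolding DD_def cc_def by simp
  fix c
  assume c: "(\<forall>j. j \<notin> {k..n - l} \<longrightarrow> c j = 0) \<and> DD \<alpha> \<beta> n k l = (\<Sum>j = k..n - l. smult (c j) (bernstein n j))"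
  have supp: "\<forall>j. j \<notin> {k..n-l} \<longrightarrow> c j - cc \<alpha> \<beta> n k l j = 0" using c unfolding cc_def by auto
  have "(\<Sum>j = k..n - l. smult (c j - cc \<alpha> \<beta> n k l j) (bernstein n j)) =
        (\<Sum>j = k..n - l. smult (c j) (bernstein n j)) - (\<Sum>j = k..n - l. smult (cc \<alpha> \<beta> n k l j) (bernstein n j))"
    by (simp add: smult_diff_left sum_subtractf)
  also have "\<dots> = 0" using c unfolding DD_def by simp
  finally have z: "(\<Sum>j = k..n - l. smult (c j - cc \<alpha> \<beta> n k l j) (bernstein n j)) = 0" .
  show "c = cc \<alpha> \<beta> n k l"
  proof
    fix j show "c j = cc \<alpha> \<beta> n k l j" using bern_indep[OF supp z, of j] by simp
  qed
qed

lemma ee_Suc: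
  fixes A Bb :: real
  assumes "p < m" "Bb > 0"
  shows "ee A Bb m (Suc p) = - ee A Bb m p * (real (m - p) * (A + real m - real p - 1)) / ((real p + 1) * (Bb + real p + 1))"
proof -
  have c: "real (m choose Suc p) = real (m choose p) * real (m - p) / (real p + 1)"
    using choose_step[OF assms(1)] by (simp add: field_simps)
  have p1: "pochhammer (A + real m - real (Suc p)) (Suc p) = (A + real m - real p - 1) * pochhammer (A + real m - real p) p"
    by (simp add: pochhammer_rec algebra_simps)
  have p2: "pochhammer (Bb + 1) (Suc p) = pochhammer (Bb + 1) p * (Bb + real p + 1)"
    by (simp add: pochhammer_Suc algebra_simps)
  have "pochhammer (Bb+1) p > 0" using assms by (intro pochhammer_pos) simp
  moreover have "Bb + real p + 1 > 0" using assms by simp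
  ultimately show ?thesis unfolding ee_def c p1 p2 by (simp add: field_simps)
qed

theorem mainTheorem4:
  fixes n k l :: nat and \<alpha> \<beta> \<sigma> :: real
  assumes "k + l \<le> n" and "\<alpha> > -1" and "\<beta> > -1" and "\<sigma> = \<alpha> + \<beta> + 1"
  shows "dual_coeff n k l \<alpha> \<beta> k (n - l) =
           (-1) ^ (n - k - l) * pochhammer (\<sigma> + 2 * real k + 2 * real l + 1) (n - k - l)
           / (real (n choose k) * real (n choose l) * Beta (\<alpha> + 2 * real l + 1) (\<beta> + 2 * real k + 1)
              * fact (n - k - l))
       \<and> (\<forall>j. k \<le> j \<and> j < n - l \<longrightarrow>
           dual_coeff n k l \<alpha> \<beta> k j =
             ((real j - real n) * (real j - real k + 1) * (real j + \<beta> + real k + 2))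
             / ((real j + 1) * (real j - real n + real l) * (real j - \<alpha> - real l - real n))
             * dual_coeff n k l \<alpha> \<beta> k (j + 1))"
proof -
  note kl = assms(1) and ab = assms(2,3)
  define m where "m = n - k - l"
  define A where "A = \<alpha> + 2 * real l + 1"
  define Bb where "Bb = \<beta> + 2 * real k + 1"
  define E where "E = Ecoef \<alpha> \<beta> n k l"
  have hn: "n = m + k + l" using kl m_def by simp
  have Ap: "A > 0" and Bp: "Bb > 0" using ab by (auto simp: A_def Bb_def)
  have CE: "dual_coeff n k l \<alpha> \<beta> k = cc \<alpha> \<beta> n k l" by (rule coeff_eq[OF ab kl])
  have ccj: "cc \<alpha> \<beta> n k l j = E * ee A Bb m (j - k) / real (n choose j)" if "k \<le> j" "j \<le> n - l" for j
    using that unfolding cc_def E_def A_def Bb_def m_def by simp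
  have E: "E = pochhammer (A + Bb) m * pochhammer (Bb + 1) m / (real (n choose k) * Beta A Bb * pochhammer A m * fact m)"
    unfolding E_def Ecoef_def A_def Bb_def m_def ..
  have part1: "dual_coeff n k l \<alpha> \<beta> k (n - l) =
           (-1) ^ (n - k - l) * pochhammer (\<sigma> + 2 * real k + 2 * real l + 1) (n - k - l)
           / (real (n choose k) * real (n choose l) * Beta (\<alpha> + 2 * real l + 1) (\<beta> + 2 * real k + 1)
              * fact (n - k - l))"
  proof -
    have e1: "n - l - k = m" using hn by simp
    have eem: "ee A Bb m m = (-1)^m * pochhammer A m / pochhammer (Bb + 1) m" unfolding ee_def by simp
    have sym: "real (n choose (n - l)) = real (n choose l)" using binomial_symmetric[of l n] kl by simp
    have s: "\<sigma> + 2 * real k + 2 * real l + 1 = A + Bb" using assms(4) unfolding A_def Bb_def by simp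
    have nz: "real (n choose k) > 0" "real (n choose l) > 0" "Beta A Bb > 0" "pochhammer A m > 0" "pochhammer (Bb+1) m > 0"
      "(fact m :: real) > 0"
      using Ap Bp kl by (auto intro!: pochhammer_pos Beta_pos)
    have "dual_coeff n k l \<alpha> \<beta> k (n - l) = E * ee A Bb m m / real (n choose l)"
      unfolding CE using ccj[of "n-l"] kl e1 sym by simp
    also have "\<dots> = (-1) ^ m * pochhammer (A + Bb) m / (real (n choose k) * real (n choose l) * Beta A Bb * fact m)"
      unfolding E eem using nz by (simp add: field_simps)
    finally show ?thesis unfolding s m_def[symmetric] A_def Bb_def .
  qed
  have part2: "dual_coeff n k l \<alpha> \<beta> k j =
             ((real j - real n) * (real j - real k + 1) * (real j + \<beta> + real k + 2))
             / ((real j + 1) * (real j - real n + real l) * (real j - \<alpha> - real l - real n))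
             * dual_coeff n k l \<alpha> \<beta> k (j + 1)" if j: "k \<le> j" "j < n - l" for j
  proof -
    define p where "p = j - k"
    have jp: "j = k + p" "p < m" using j hn p_def by auto
    have e2: "Suc j - k = Suc p" using jp by simp
    have c1: "dual_coeff n k l \<alpha> \<beta> k j = E * ee A Bb m p / real (n choose j)"
      unfolding CE using ccj[of j] j p_def by simp
    have c2: "dual_coeff n k l \<alpha> \<beta> k (j+1) = E * ee A Bb m (Suc p) / real (n choose Suc j)"
      unfolding CE using ccj[of "Suc j"] j e2 by simp
    have cs: "real (n choose Suc j) = real (n choose j) * real (n - j) / (real j + 1)"
      using choose_step[of j n] j by (simp add: field_simps)
    have nzC: "real (n choose j) > 0" using j by simp
    define N where "N = real m + real l - real p"
    define y where "y = real p + 1"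
    define z where "z = Bb + real p + 1"
    define w where "w = real j + 1"
    define V where "V = real m - real p"
    define T where "T = A + real m - real p - 1"
    have rj: "real j = real k + real p" "real n = real m + real k + real l" "real (n - j) = N"
      "real (m - p) = V"
      using jp hn unfolding N_def V_def by auto
    have f1: "real j - real n = - N" "real j - real k + 1 = y" "real j + \<beta> + real k + 2 = z"
      "real j - real n + real l = - V" "real j - \<alpha> - real l - real n = - T"
      unfolding N_def y_def z_def V_def T_def A_def Bb_def using rj(1,2) by auto
    have es: "ee A Bb m (Suc p) = ee A Bb m p * (- V * T / (y * z))"
      unfolding ee_Suc[OF jp(2) Bp] rj(4) y_def z_def T_def by (simp add: algebra_simps)
    have cs': "real (n choose Suc j) = real (n choose j) * N / w" unfolding cs rj(3) w_def ..
    have nz: "N \<noteq> 0" "y \<noteq> 0" "z \<noteq> 0" "w \<noteq> 0" "V \<noteq> 0" "T \<noteq> 0" "real (n choose j) \<noteq> 0"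
      using jp Bp Ap nzC unfolding N_def y_def z_def w_def V_def T_def by auto
    have gen: "E' * e / C = (-N') * y' * z' / (w' * (-V') * (-T')) * (E' * (e * (- V' * T' / (y' * z'))) / (C * N' / w'))"
      if "N' \<noteq> 0" "y' \<noteq> 0" "z' \<noteq> 0" "w' \<noteq> 0" "V' \<noteq> 0" "T' \<noteq> 0" "C \<noteq> 0"
      for E' e C N' y' z' w' V' T' :: real
      using that by (simp add: field_simps)
    have Req: "((real j - real n) * (real j - real k + 1) * (real j + \<beta> + real k + 2))
             / ((real j + 1) * (real j - real n + real l) * (real j - \<alpha> - real l - real n)) =
             (-N) * y * z / (w * (-V) * (-T))"
      by (subst f1(4), subst f1(5), subst f1(1), subst f1(2), subst f1(3)) (simp only: w_def)
    show ?thesis unfolding c1 c2 Req es cs'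
      by (rule gen[OF nz(1-7)])
  qed
  show ?thesis using part1 part2 by blast
qed


end
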